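(* Let $q$ be a prime power and $m>1$ an integer. Let $L_1(x),L_2(x)\in\mathbf{F}_q[x]$ be linearized polynomials, let $h(x)\in\mathbf{F}_q[x]$ and $\gamma\in\mathbf{F}_{q^m}$. Then $$F(x):=L_1(x)+\bigl(L_2(x)+\gamma\bigr)h\bigl(\mathrm{Tr}_{\mathbf{F}_{q^m}/\mathbf{F}_q}(x)\bigr)$$ is a permutation polynomial of $\mathbf{F}_{q^m}$ if and only if both of the following hold: (1) $L_1(x)+\bigl(L_2(x)+\mathrm{Tr}_{\mathbf{F}_{q^m}/\mathbf{F}_q}(\gamma)\bigr)h(x)\in\mathbf{F}_q[x]$ is a permutation polynomial of $\mathbf{F}_q$; (2) for every $y\in\mathbf{F}_q$, an element $x\in\mathbf{F}_{q^m}$ satisfies both $L_1(x)+L_2(x)h(y)=0$ and $\mathrm{Tr}_{\mathbf{F}_{q^m}/\mathbf{F}_q}(x)=0$ if and only if $x=0$.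
   Context: $\mathrm{Tr}_{\mathbf{F}_{q^m}/\mathbf{F}_q}(x)=x+x^q+\cdots+x^{q^{m-1}}$. A linearized polynomial with coefficients in $\mathbf{F}_q$ is a polynomial of the form $\sum_{i=0}^{m-1}a_i x^{q^i}$ with $a_i\in\mathbf{F}_q$. A permutation polynomial of a finite field $K$ is a polynomial inducing a bijection $K\to K$. *)

theory Defs
  imports "HOL-Computational_Algebra.Polynomial" "HOL-Computational_Algebra.Primes"
begin

text \<open>The ambient field F_{q^m} is a finite field type 'a with CARD('a) = q^m.
  The subfield F_q is the set of fixed points of x |-> x^q.\<close>
definition subfield_Fq :: "nat \<Rightarrow> 'a::{field,finite} set" where
  "subfield_Fq q = {x. x ^ q = x}"

definition trace_Fq :: "nat \<Rightarrow> nat \<Rightarrow> 'a::{field,finite} \<Rightarrow> 'a" where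
  "trace_Fq q m x = (\<Sum>i<m. x ^ (q ^ i))"

definition linearized :: "nat \<Rightarrow> nat \<Rightarrow> (nat \<Rightarrow> 'a::{field,finite}) \<Rightarrow> 'a \<Rightarrow> 'a" where
  "linearized q m a x = (\<Sum>i<m. a i * x ^ (q ^ i))"

definition is_perm_on :: "'a set \<Rightarrow> ('a \<Rightarrow> 'a) \<Rightarrow> bool" where
  "is_perm_on K f = bij_betw f K K"

definition prime_power :: "nat \<Rightarrow> bool" where
  "prime_power q = (\<exists>p k. prime p \<and> k > 0 \<and> q = p ^ k)"

end

theory Submission
  imports Defs
begin

lemma frob_add:
  fixes x y :: "'a::{field,finite}"
  assumes "prime CHAR('a)" "q = CHAR('a)^k"
  shows "(x+y)^(q^i) = x^(q^i)+y^(q^i)"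
  using freshmans_dream'[OF assms(1), of "q^i" "k*i"] assms by (simp add: power_mult)

lemma frob_sum:
  fixes f :: "'b \<Rightarrow> 'a::{field,finite}"
  assumes "prime CHAR('a)" "q = CHAR('a)^k"
  shows "(sum f A)^(q^i) = (\<Sum>j\<in>A. f j^(q^i))"
  using freshmans_dream_sum'[OF assms(1), of "q^i" "k*i"] assms by (simp add: power_mult)

lemma pow_card_same:
  fixes x :: "'a :: {field,finite}"
  shows   "x ^ card (UNIV :: 'a set) = x"
proof (cases "x = 0")
  case False
  have "x * (\<Prod>y\<in>UNIV-{0}. x * y) = x * x ^ (card (UNIV :: 'a set) - 1) * \<Prod>(UNIV-{0})"
    by (simp add: prod.distrib mult_ac)
  also have "x * x ^ (card (UNIV :: 'a set) - 1) = x ^ Suc (card (UNIV :: 'a set) - 1)"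
    by (subst power_Suc) auto
  also have "Suc (card (UNIV :: 'a set) - 1) = card (UNIV :: 'a set)"
    using finite_UNIV_card_ge_0[where ?'a = 'a] by simp
  also have "(\<Prod>y\<in>UNIV-{0}. x * y) = (\<Prod>y\<in>UNIV-{0}. y)"
    by (rule prod.reindex_bij_witness[of _ "\<lambda>y. y / x" "\<lambda>y. x * y"]) (use False in auto)
  finally show ?thesis
    by simp
qed (use finite_UNIV_card_ge_0[where ?'a = 'a] in auto)

lemma of_nat_card_zero: "of_nat (card (UNIV::'a::{field,finite} set)) = (0::'a)"
proof -
  have e: "(\<Sum>x\<in>(UNIV::'a set). x) = (\<Sum>x\<in>UNIV. x + 1)"
    by (rule sum.reindex_bij_witness[of _ "\<lambda>y. y + 1" "\<lambda>y. y - 1"]) auto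
  have "(\<Sum>x\<in>(UNIV::'a set). x + 1) = (\<Sum>x\<in>UNIV. x) + of_nat (card (UNIV::'a set))"
    by (simp only: sum.distrib) simp
  with e show ?thesis by simp
qed

lemma CHAR_dvd_card: "CHAR('a::{field,finite}) dvd card (UNIV::'a set)"
  using of_nat_card_zero of_nat_eq_0_iff_char_dvd by blast

lemma CHAR_prime: "prime CHAR('a::{field,finite})"
  by (intro prime_CHAR_semidom finite_imp_CHAR_pos) simp

lemma cancel0: "(a::'b::ab_group_add) = b + s \<Longrightarrow> a = b \<Longrightarrow> s = 0"
  by simp

lemma ring_aux: "(a::'b::comm_ring) + b + (c + e + g) * P = a + (c + g) * P + (b + e * P)"
  by (simp add: algebra_simps)

lemma cancel_aux: "(S::'b::ab_group_add) = a + T \<Longrightarrow> S = U + a \<Longrightarrow> T = U"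
  by (metis add.commute add_left_cancel)

context
  fixes q m k :: nat and TYP :: "'a::{field,finite} itself"
  assumes chp: "prime CHAR('a)" and qk: "q = CHAR('a)^k" and card: "card (UNIV::'a set) = q^m"
begin

lemma q_pos: "q > 0" using qk chp prime_gt_0_nat by auto

lemma Fq_iff: "(x::'a) \<in> subfield_Fq q \<longleftrightarrow> x^q = x" by (simp add: subfield_Fq_def)

lemma frob1: "((x::'a)+y)^q = x^q+y^q"
  using frob_add[OF chp qk, of x y 1] by simp

lemma Fq_add: "x \<in> subfield_Fq q \<Longrightarrow> y \<in> subfield_Fq q \<Longrightarrow> (x::'a)+y \<in> subfield_Fq q"
  by (simp add: Fq_iff frob1)

lemma Fq_mult: "x \<in> subfield_Fq q \<Longrightarrow> y \<in> subfield_Fq q \<Longrightarrow> (x::'a)*y \<in> subfield_Fq q"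
  by (simp add: Fq_iff power_mult_distrib)

lemma Fq_div: "x \<in> subfield_Fq q \<Longrightarrow> y \<in> subfield_Fq q \<Longrightarrow> (x::'a)/y \<in> subfield_Fq q"
  by (simp add: Fq_iff power_divide)

lemma Fq_diff: "x \<in> subfield_Fq q \<Longrightarrow> y \<in> subfield_Fq q \<Longrightarrow> (x::'a)-y \<in> subfield_Fq q"
proof -
  assume a: "x \<in> subfield_Fq q" "y \<in> subfield_Fq q"
  have "(x - y + y)^q = (x-y)^q + y^q" by (rule frob1)
  then have "(x-y)^q = x^q - y^q" by (simp add: eq_diff_eq)
  then show ?thesis using a by (simp add: Fq_iff)
qed

lemma Fq_zero: "(0::'a) \<in> subfield_Fq q" using q_pos by (simp add: Fq_iff)

lemma Fq_pow: "x \<in> subfield_Fq q \<Longrightarrow> (x::'a)^n \<in> subfield_Fq q"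
  by (simp add: Fq_iff flip: power_mult) (metis mult.commute power_mult)

lemma Fq_sum: "(\<And>i. i \<in> A \<Longrightarrow> f i \<in> subfield_Fq q) \<Longrightarrow> (\<Sum>i\<in>A. (f i::'a)) \<in> subfield_Fq q"
  by (induction A rule: infinite_finite_induct) (auto simp: Fq_zero Fq_add)

lemma Fq_poly: "(\<forall>i. coeff h i \<in> subfield_Fq q) \<Longrightarrow> y \<in> subfield_Fq q \<Longrightarrow> poly h (y::'a) \<in> subfield_Fq q"
  unfolding poly_altdef by (intro Fq_sum Fq_mult Fq_pow) auto

lemma Fq_powq: "c \<in> subfield_Fq q \<Longrightarrow> (c::'a)^(q^i) = c"
proof (induction i)
  case (Suc i)
  have "c^(q^Suc i) = (c^q)^(q^i)" by (simp add: power_mult mult.commute)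
  then show ?case using Suc by (simp add: Fq_iff)
qed simp

lemma pow_qm: "(x::'a)^(q^m) = x" using pow_card_same[of x] card by simp

lemma tr_add: "trace_Fq q m ((x::'a)+y) = trace_Fq q m x + trace_Fq q m y"
  unfolding trace_Fq_def by (simp add: frob_add[OF chp qk] sum.distrib)

lemma tr_smult: "c \<in> subfield_Fq q \<Longrightarrow> trace_Fq q m ((c::'a)*x) = c * trace_Fq q m x"
  unfolding trace_Fq_def by (simp add: power_mult_distrib Fq_powq sum_distrib_left)

lemma pow_pow_q: "((x::'a)^(q^i))^(q^j) = x^(q^(i+j))"
  by (simp only: power_add power_mult)

lemma tr_Fq: "trace_Fq q m (x::'a) \<in> subfield_Fq q"
proof -
  let ?f = "\<lambda>i. x^(q^i)"
  have "(trace_Fq q m x)^(q^1) = (\<Sum>i<m. (?f i)^(q^1))"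
    unfolding trace_Fq_def by (rule frob_sum[OF chp qk])
  also have "\<dots> = (\<Sum>i<m. ?f (Suc i))"
    by (intro sum.cong refl) (simp only: pow_pow_q Suc_eq_plus1)
  finally have 1: "(trace_Fq q m x)^q = (\<Sum>i<m. ?f (Suc i))" by (simp only: power_one_right)
  have 2: "(\<Sum>i<Suc m. ?f i) = ?f 0 + (\<Sum>i<m. ?f (Suc i))" by (rule sum.lessThan_Suc_shift)
  have 5: "(\<Sum>i<Suc m. ?f i) = (\<Sum>i<m. ?f i) + ?f m" by (rule sum.lessThan_Suc)
  have 3: "?f m = ?f 0" using pow_qm by simp
  have 4: "(\<Sum>i<m. ?f (Suc i)) = (\<Sum>i<m. ?f i)" using cancel_aux[OF 2 5[unfolded 3]] .
  show ?thesis unfolding Fq_iff using 1 4 by (simp only: trace_Fq_def)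
qed

lemma tr_frob: "trace_Fq q m ((x::'a)^(q^j)) = (trace_Fq q m x)^(q^j)"
proof -
  have "(trace_Fq q m x)^(q^j) = (\<Sum>i<m. (x^(q^i))^(q^j))"
    unfolding trace_Fq_def by (rule frob_sum[OF chp qk])
  also have "\<dots> = (\<Sum>i<m. (x^(q^j))^(q^i))"
    by (intro sum.cong refl) (simp only: pow_pow_q add.commute)
  finally show ?thesis unfolding trace_Fq_def by simp
qed

lemma tr_zero: "trace_Fq q m (0::'a) = 0"
  unfolding trace_Fq_def using q_pos by (simp add: zero_power)

context
  fixes a :: "nat \<Rightarrow> 'a"
  assumes aF: "\<forall>i<m. a i \<in> subfield_Fq q"
begin

lemma lin_add: "linearized q m a (x+y) = linearized q m a x + linearized q m a y"
  unfolding linearized_def by (simp add: frob_add[OF chp qk] sum.distrib distrib_left)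

lemma lin_smult: "c \<in> subfield_Fq q \<Longrightarrow> linearized q m a (c*x) = c * linearized q m a x"
  unfolding linearized_def by (simp add: power_mult_distrib Fq_powq sum_distrib_left mult_ac)

lemma lin_zero: "linearized q m a 0 = 0"
  unfolding linearized_def using q_pos by (simp add: zero_power)

lemma lin_Fq: "y \<in> subfield_Fq q \<Longrightarrow> linearized q m a y \<in> subfield_Fq q"
  unfolding linearized_def using aF by (intro Fq_sum Fq_mult Fq_pow) auto

lemma tr_lin: "trace_Fq q m (linearized q m a x) = linearized q m a (trace_Fq q m x)"
proof -
  have add: "trace_Fq q m (sum f A) = (\<Sum>i\<in>A. trace_Fq q m (f i))" for f :: "nat \<Rightarrow> 'a" and A :: "nat set"
    by (induction A rule: infinite_finite_induct) (auto simp: tr_add tr_zero)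
  show ?thesis unfolding linearized_def add
    using aF by (intro sum.cong) (auto simp: tr_smult tr_frob)
qed

end

lemma q_gt1: "q > 1"
proof (rule ccontr)
  assume "\<not> q > 1"
  with q_pos have "q = 1" by simp
  with card have "card (UNIV::'a set) = 1" by simp
  then obtain z where "(UNIV::'a set) = {z}" by (meson card_1_singletonE)
  then have "(0::'a) = 1" by (metis UNIV_I singletonD)
  then show False by simp
qed

lemma tr_nonzero:
  assumes m0: "m > 0"
  shows "\<exists>x::'a. trace_Fq q m x \<noteq> 0"
proof (rule ccontr)
  assume "\<not> (\<exists>x::'a. trace_Fq q m x \<noteq> 0)"
  then have z: "\<And>x::'a. trace_Fq q m x = 0" by blast
  define P :: "'a poly" where "P = (\<Sum>i<m. monom 1 (q^i))"
  have ev: "poly P x = trace_Fq q m x" for x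
    unfolding P_def trace_Fq_def by (simp add: poly_sum poly_monom)
  have "coeff P 1 = (\<Sum>i<m. if q^i = 1 then 1 else 0)"
    unfolding P_def by (simp add: coeff_sum coeff_monom)
  also have "\<dots> = (\<Sum>i<m. if i = 0 then 1 else 0)"
  proof (intro sum.cong refl)
    fix i :: nat
    have "q^i = 1 \<longleftrightarrow> i = 0" using q_gt1 by (metis neq0_conv one_less_power less_irrefl power_0)
    then show "(if q ^ i = 1 then 1 else 0) = (if i = 0 then 1 else (0::'a))" by simp
  qed
  also have "\<dots> = 1" using m0 by (simp add: sum.delta)
  finally have "coeff P 1 = 1" by simp
  then have P0: "P \<noteq> 0" by auto
  have dg: "degree P \<le> q^(m-1)"
    unfolding P_def
  proof (rule degree_sum_le)
    fix i assume "i \<in> {..<m}"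
    then have "q^i \<le> q^(m-1)" using q_pos by (intro power_increasing) auto
    then show "degree (monom (1::'a) (q ^ i)) \<le> q ^ (m - 1)"
      using degree_monom_le order_trans by blast
  qed simp
  have "{x. poly P x = 0} = (UNIV::'a set)" using z ev by auto
  then have "card (UNIV::'a set) \<le> q^(m-1)"
    using card_poly_roots_bound[OF P0] dg by simp
  moreover have "q^(m-1) < q^m" using q_gt1 m0 by (intro power_strict_increasing) auto
  ultimately show False using card by simp
qed

lemma tr_surj: "m > 0 \<Longrightarrow> y \<in> subfield_Fq q \<Longrightarrow> \<exists>x::'a. trace_Fq q m x = y"
proof -
  assume m0: "m > 0" and y: "y \<in> subfield_Fq q"
  obtain x0 :: 'a where t0: "trace_Fq q m x0 \<noteq> 0" using tr_nonzero[OF m0] by blast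
  have "y / trace_Fq q m x0 \<in> subfield_Fq q" using y tr_Fq by (intro Fq_div)
  then have "trace_Fq q m ((y / trace_Fq q m x0) * x0) = (y / trace_Fq q m x0) * trace_Fq q m x0"
    by (rule tr_smult)
  then have "trace_Fq q m ((y / trace_Fq q m x0) * x0) = y"
    using t0 by simp
  then show ?thesis by blast
qed

end

theorem corollary2p1:
  fixes q m :: nat and a1 a2 :: "nat \<Rightarrow> 'a::{field,finite}"
    and h :: "'a poly" and \<gamma> :: 'a
  assumes "prime_power q" and "m > 1" and "card (UNIV :: 'a set) = q ^ m"
    and "\<forall>i<m. a1 i \<in> subfield_Fq q"
    and "\<forall>i<m. a2 i \<in> subfield_Fq q"
    and "\<forall>i. coeff h i \<in> subfield_Fq q"
  shows "is_perm_on UNIV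
           (\<lambda>x. linearized q m a1 x + (linearized q m a2 x + \<gamma>) * poly h (trace_Fq q m x))
    \<longleftrightarrow>
         (is_perm_on (subfield_Fq q)
            (\<lambda>x. linearized q m a1 x + (linearized q m a2 x + trace_Fq q m \<gamma>) * poly h x)
          \<and> (\<forall>y\<in>subfield_Fq q. \<forall>x::'a.
                (linearized q m a1 x + linearized q m a2 x * poly h y = 0 \<and> trace_Fq q m x = 0)
                \<longleftrightarrow> x = 0))"
proof -
  have chp: "prime CHAR('a)" by (rule CHAR_prime)
  obtain p j where p: "prime p" "j > 0" "q = p ^ j" using assms(1) unfolding prime_power_def by blast
  have "CHAR('a) dvd p ^ (j*m)" using CHAR_dvd_card[where 'a='a] assms(3) p(3) by (simp add: power_mult)
  then have "CHAR('a) dvd p" using chp prime_dvd_power by blast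
  then have cp: "CHAR('a) = p" using chp p(1) primes_dvd_imp_eq by blast
  have qk: "q = CHAR('a) ^ j" using cp p(3) by simp
  note C = chp qk assms(3)
  have m0: "m > 0" using assms(2) by simp
  let ?L1 = "linearized q m a1" and ?L2 = "linearized q m a2" and ?T = "trace_Fq q m :: 'a \<Rightarrow> 'a"
  let ?F = "\<lambda>x. ?L1 x + (?L2 x + \<gamma>) * poly h (?T x)"
  let ?g = "\<lambda>x. ?L1 x + (?L2 x + ?T \<gamma>) * poly h x"
  let ?Q = "subfield_Fq q :: 'a set"
  have Tadd: "\<And>x y. ?T (x+y) = ?T x + ?T y" using tr_add[OF C] .
  have TQ: "\<And>x. ?T x \<in> ?Q" using tr_Fq[OF C] .
  have hQ: "\<And>y. y \<in> ?Q \<Longrightarrow> poly h y \<in> ?Q" using Fq_poly[OF C assms(6)] .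
  have TF: "?T (?F x) = ?g (?T x)" for x
  proof -
    have mc: "(?L2 x + \<gamma>) * poly h (?T x) = poly h (?T x) * (?L2 x + \<gamma>)" by (rule mult.commute)
    have "?T (?F x) = ?T (?L1 x) + ?T (poly h (?T x) * (?L2 x + \<gamma>))"
      by (simp only: mc Tadd)
    also have "\<dots> = ?L1 (?T x) + poly h (?T x) * (?L2 (?T x) + ?T \<gamma>)"
      by (simp only: tr_smult[OF C hQ[OF TQ]] tr_lin[OF C assms(4)] tr_lin[OF C assms(5)] Tadd)
    finally show ?thesis by (simp add: mult.commute)
  qed
  have gQ: "?g y \<in> ?Q" if "y \<in> ?Q" for y
    using that by (intro Fq_add[OF C] Fq_mult[OF C] TQ hQ lin_Fq[OF C assms(4)] lin_Fq[OF C assms(5)])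
  have Ffib: "?F (x+d) = ?F x + (?L1 d + ?L2 d * poly h (?T x))" if "?T d = 0" for x d
    by (simp only: that lin_add[OF C assms(4)] lin_add[OF C assms(5)] Tadd add_0_right ring_aux)
  have L0: "?L1 0 = 0" "?L2 0 = 0" using lin_zero[OF C assms(4)] lin_zero[OF C assms(5)] by auto
  have T0: "?T 0 = 0" using tr_zero[OF C] .
  have finQ: "finite ?Q" by simp
  show ?thesis
  proof
    assume bF: "is_perm_on UNIV ?F"
    then have bijF: "bij ?F" unfolding is_perm_on_def .
    have injF: "inj ?F" using bijF by (rule bij_is_inj)
    have surjF: "surj ?F" using bijF by (rule bij_is_surj)
    have img: "?g ` ?Q = ?Q"
    proof
      show "?g ` ?Q \<subseteq> ?Q" by (rule image_subsetI) (rule gQ)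
      show "?Q \<subseteq> ?g ` ?Q"
      proof
        fix z assume "z \<in> ?Q"
        then obtain w where w: "?T w = z" using tr_surj[OF C m0] by blast
        from surjD[OF surjF, of w] obtain x where xw: "w = ?F x" ..
        have "?T (?F x) = z" using w xw by (simp only:)
        then have "z = ?g (?T x)" using TF[of x] by (simp only:)
        then show "z \<in> ?g ` ?Q" by (rule image_eqI[OF _ TQ])
      qed
    qed
    have "inj_on ?g ?Q" by (rule eq_card_imp_inj_on[OF finQ]) (simp only: img)
    then have 1: "is_perm_on ?Q ?g" unfolding is_perm_on_def bij_betw_def using img by (rule conjI)
    have 2: "\<forall>y\<in>?Q. \<forall>x::'a. (?L1 x + ?L2 x * poly h y = 0 \<and> ?T x = 0) \<longleftrightarrow> x = 0"
    proof (intro ballI allI iffI)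
      fix y x assume y: "y \<in> ?Q" and h0: "?L1 x + ?L2 x * poly h y = 0 \<and> ?T x = 0"
      obtain x' where x': "?T x' = y" using tr_surj[OF C m0 y] by blast
      have "?F (x' + x) = ?F x' + (?L1 x + ?L2 x * poly h (?T x'))" by (rule Ffib[where x=x' and d=x, OF conjunct2[OF h0]])
      then have "?F (x' + x) = ?F x'" using conjunct1[OF h0] unfolding x' by (simp only: add_0_right)
      then have "x' + x = x'" by (rule injD[OF injF])
      then show "x = 0" by simp
    next
      fix y x :: 'a assume "x = 0"
      then show "?L1 x + ?L2 x * poly h y = 0 \<and> ?T x = 0" using L0 T0 by simp
    qed
    from 1 2 show "is_perm_on ?Q ?g \<and> (\<forall>y\<in>?Q. \<forall>x::'a. (?L1 x + ?L2 x * poly h y = 0 \<and> ?T x = 0) \<longleftrightarrow> x = 0)"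
      by (rule conjI)
  next
    assume a: "is_perm_on ?Q ?g \<and> (\<forall>y\<in>?Q. \<forall>x::'a. (?L1 x + ?L2 x * poly h y = 0 \<and> ?T x = 0) \<longleftrightarrow> x = 0)"
    then have injg: "inj_on ?g ?Q" unfolding is_perm_on_def bij_betw_def by blast
    have injF: "inj ?F"
    proof (rule injI)
      fix x x' assume e: "?F x = ?F x'"
      have "?g (?T x) = ?T (?F x)" by (rule TF[symmetric])
      also have "\<dots> = ?T (?F x')" by (simp only: e)
      also have "\<dots> = ?g (?T x')" by (rule TF)
      finally have "?g (?T x) = ?g (?T x')" .
      then have tt: "?T x = ?T x'" by (rule inj_onD[OF injg _ TQ TQ])
      define d where "d = x - x'"
      have xd: "x = x' + d" unfolding d_def by simp
      have Td: "?T d = 0" using tt Tadd[of x' d] xd by simp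
      have "?F x = ?F x' + (?L1 d + ?L2 d * poly h (?T x'))" unfolding xd by (rule Ffib[OF Td])
      then have "?L1 d + ?L2 d * poly h (?T x') = 0" using e by (rule cancel0)
      moreover have c2: "\<forall>y\<in>?Q. \<forall>x::'a. (?L1 x + ?L2 x * poly h y = 0 \<and> ?T x = 0) \<longleftrightarrow> x = 0"
        using a by (rule conjunct2)
      ultimately have "d = 0" using c2[rule_format, OF TQ[of x'], of d] Td by blast
      then show "x = x'" using xd by simp
    qed
    have "surj ?F" by (rule finite_UNIV_inj_surj[OF _ injF]) simp
    with injF show "is_perm_on UNIV ?F" unfolding is_perm_on_def bij_betw_def by (rule conjI)
  qed
qed

end
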